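(* For integers $0\le k\le n$, $$\frac{[n]!}{[k]!\cdot F^k([n-k]!)}=\sum_{S}\mathrm{wt}(S),$$ where the sum runs over all $k$-element subsets $S$ of $\{1,\ldots,n\}$.
   Context: Work in $\mathbb{Q}(x_1,x_2,\ldots)$ with the field endomorphism $F$ given by $F(x_i)=x_{i+1}$. Define $[n]:=x_1+\cdots+x_n$, $[0]!:=1$, $[n]!:=[n]\cdot F([n-1]!)=\prod_{j=0}^{n-1}F^j[n-j]$. For a $k$-element set $S=\{i_1>i_2>\cdots>i_k\}$ of positive integers, $\mathrm{wt}(S):=\frac{\prod_{j=1}^k F^{i_j-1}[j]}{[k]!}$, with $\mathrm{wt}(\emptyset)=1$. *)

theory Defs
  imports Complex_Main "HOL-Library.Poly_Mapping" "HOL-Computational_Algebra.Fraction_Field"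
begin

text \<open>Polynomials over the rationals in the variables x_0, x_1, x_2, ...
  (a monomial is a finitely supported exponent map nat to nat); only x_1, x_2, ... are used.\<close>

type_synonym mpoly = "(nat \<Rightarrow>\<^sub>0 nat) \<Rightarrow>\<^sub>0 rat"
type_synonym ratfun = "mpoly fract"

definition X :: "nat \<Rightarrow> ratfun" where
  "X i = Fract (Poly_Mapping.single (Poly_Mapping.single i 1) 1) 1"

definition shift_mon :: "(nat \<Rightarrow>\<^sub>0 nat) \<Rightarrow> (nat \<Rightarrow>\<^sub>0 nat)" where
  "shift_mon m = (\<Sum>i\<in>Poly_Mapping.keys m. Poly_Mapping.single (Suc i) (Poly_Mapping.lookup m i))"

definition F_poly :: "mpoly \<Rightarrow> mpoly" where
  "F_poly p = (\<Sum>m\<in>Poly_Mapping.keys p. Poly_Mapping.single (shift_mon m) (Poly_Mapping.lookup p m))"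

definition F :: "ratfun \<Rightarrow> ratfun" where
  "F q = (SOME r. \<exists>a b. b \<noteq> 0 \<and> q = Fract a b \<and> r = Fract (F_poly a) (F_poly b))"

definition bracket :: "nat \<Rightarrow> ratfun" where
  "bracket n = (\<Sum>i = 1..n. X i)"

fun qfact :: "nat \<Rightarrow> ratfun" where
  "qfact 0 = 1"
| "qfact (Suc n) = bracket (Suc n) * F (qfact n)"

text \<open>wt(S) for S = {i_1 > ... > i_k}: the element i of S is i_j where j is the number
  of elements of S that are at least i.\<close>
definition wt :: "nat set \<Rightarrow> ratfun" where
  "wt S = (\<Prod>i\<in>S. (F ^^ (i - 1)) (bracket (card {i'\<in>S. i \<le> i'}))) / qfact (card S)"

end

theory Submission imports Defs begin

lemma lookup_shift_mon: "Poly_Mapping.lookup (shift_mon m) j = (case j of 0 \<Rightarrow> 0 | Suc i \<Rightarrow> Poly_Mapping.lookup m i)"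
proof -
  have "Poly_Mapping.lookup (shift_mon m) j = (\<Sum>i\<in>Poly_Mapping.keys m. (Poly_Mapping.lookup m i when Suc i = j))"
    unfolding shift_mon_def by (simp add: lookup_sum lookup_single)
  also have "\<dots> = (case j of 0 \<Rightarrow> 0 | Suc i \<Rightarrow> Poly_Mapping.lookup m i)"
  proof (cases j)
    case 0 then show ?thesis by simp
  next
    case (Suc i0)
    have "(\<Sum>i\<in>Poly_Mapping.keys m. (Poly_Mapping.lookup m i when Suc i = j)) =
          (\<Sum>i\<in>Poly_Mapping.keys m. if i = i0 then Poly_Mapping.lookup m i else 0)"
      using Suc by (intro sum.cong) auto
    also have "\<dots> = Poly_Mapping.lookup m i0"
      by (simp add: sum.delta in_keys_iff)
    finally show ?thesis using Suc by simp
  qed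
  finally show ?thesis .
qed

lemma shift_mon_add: "shift_mon (m + m') = shift_mon m + shift_mon m'"
  by (rule poly_mapping_eqI) (simp add: lookup_shift_mon lookup_add split: nat.split)

lemma shift_mon_zero: "shift_mon 0 = 0"
  by (rule poly_mapping_eqI) (simp add: lookup_shift_mon split: nat.split)

lemma shift_mon_inj: "shift_mon m = shift_mon m' \<longleftrightarrow> m = m'"
proof
  assume h: "shift_mon m = shift_mon m'"
  show "m = m'"
  proof (rule poly_mapping_eqI)
    fix i
    have "Poly_Mapping.lookup (shift_mon m) (Suc i) = Poly_Mapping.lookup (shift_mon m') (Suc i)" using h by simp
    then show "Poly_Mapping.lookup m i = Poly_Mapping.lookup m' i" by (simp add: lookup_shift_mon)
  qed
qed simp

lemma shift_mon_single: "shift_mon (Poly_Mapping.single i 1) = Poly_Mapping.single (Suc i) 1"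
  by (rule poly_mapping_eqI) (simp add: lookup_shift_mon lookup_single when_def split: nat.split)

lemma lookup_F_poly_shift: "Poly_Mapping.lookup (F_poly p) (shift_mon m) = Poly_Mapping.lookup p m"
proof -
  have "Poly_Mapping.lookup (F_poly p) (shift_mon m) = (\<Sum>m'\<in>Poly_Mapping.keys p. if m' = m then Poly_Mapping.lookup p m' else 0)"
    unfolding F_poly_def by (simp add: lookup_sum lookup_single when_def shift_mon_inj)
  also have "\<dots> = Poly_Mapping.lookup p m" by (simp add: sum.delta in_keys_iff)
  finally show ?thesis .
qed

lemma lookup_F_poly_other: "k \<notin> range shift_mon \<Longrightarrow> Poly_Mapping.lookup (F_poly p) k = 0"
  unfolding F_poly_def by (auto simp add: lookup_sum lookup_single when_def intro!: sum.neutral)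

lemma F_poly_add: "F_poly (p + q) = F_poly p + F_poly q"
proof (rule poly_mapping_eqI)
  fix k show "Poly_Mapping.lookup (F_poly (p + q)) k = Poly_Mapping.lookup (F_poly p + F_poly q) k"
    by (cases "k \<in> range shift_mon") (auto simp: lookup_add lookup_F_poly_shift lookup_F_poly_other)
qed

lemma F_poly_zero: "F_poly 0 = 0"
  unfolding F_poly_def by simp

lemma F_poly_sum: "F_poly (sum f A) = (\<Sum>a\<in>A. F_poly (f a))"
  by (induction A rule: infinite_finite_induct) (auto simp: F_poly_zero F_poly_add)

lemma F_poly_single: "F_poly (Poly_Mapping.single m a) = Poly_Mapping.single (shift_mon m) a"
  unfolding F_poly_def by (cases "a = 0") auto

lemma poly_expand: "(p::mpoly) = (\<Sum>m\<in>Poly_Mapping.keys p. Poly_Mapping.single m (Poly_Mapping.lookup p m))"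
proof (rule poly_mapping_eqI)
  fix k
  show "Poly_Mapping.lookup p k = Poly_Mapping.lookup (\<Sum>m\<in>Poly_Mapping.keys p. Poly_Mapping.single m (Poly_Mapping.lookup p m)) k"
    by (simp add: lookup_sum lookup_single when_def sum.delta in_keys_iff)
qed

lemma F_poly_mult: "F_poly (p * q) = F_poly p * F_poly q"
proof -
  let ?s = "\<lambda>(p::mpoly) m. Poly_Mapping.single m (Poly_Mapping.lookup p m)"
  have "p * q = (\<Sum>m\<in>Poly_Mapping.keys p. ?s p m) * (\<Sum>m'\<in>Poly_Mapping.keys q. ?s q m')"
    using poly_expand[of p] poly_expand[of q] by simp
  also have "\<dots> = (\<Sum>m\<in>Poly_Mapping.keys p. \<Sum>m'\<in>Poly_Mapping.keys q. ?s p m * ?s q m')"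
    by (simp add: sum_product)
  finally have pq: "p * q = \<dots>" .
  have "F_poly p * F_poly q = (\<Sum>m\<in>Poly_Mapping.keys p. F_poly (?s p m)) * (\<Sum>m'\<in>Poly_Mapping.keys q. F_poly (?s q m'))"
    using poly_expand[of p] poly_expand[of q] by (metis F_poly_sum)
  also have "\<dots> = (\<Sum>m\<in>Poly_Mapping.keys p. \<Sum>m'\<in>Poly_Mapping.keys q. F_poly (?s p m) * F_poly (?s q m'))"
    by (simp add: sum_product)
  finally show ?thesis using pq
    by (simp add: F_poly_sum F_poly_single mult_single shift_mon_add)
qed

lemma F_poly_one: "F_poly 1 = 1"
  by (metis F_poly_single shift_mon_zero single_one)

lemma F_poly_nonzero: "p \<noteq> 0 \<Longrightarrow> F_poly p \<noteq> 0"
  by (metis lookup_F_poly_shift lookup_zero poly_mapping_eqI)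


lemma F_Fract: assumes "b \<noteq> 0" shows "F (Fract a b) = Fract (F_poly a) (F_poly b)"
  unfolding F_def
proof (rule someI2)
  show "\<exists>a' b'. b' \<noteq> 0 \<and> Fract a b = Fract a' b' \<and> Fract (F_poly a) (F_poly b) = Fract (F_poly a') (F_poly b')"
    using assms by blast
next
  fix r assume "\<exists>c d. d \<noteq> 0 \<and> Fract a b = Fract c d \<and> r = Fract (F_poly c) (F_poly d)"
  then obtain c d where d: "d \<noteq> 0" "Fract a b = Fract c d" "r = Fract (F_poly c) (F_poly d)" by blast
  have "a * d = c * b" using d assms by (simp add: eq_fract)
  then have "F_poly a * F_poly d = F_poly c * F_poly b" by (metis F_poly_mult)
  then show "r = Fract (F_poly a) (F_poly b)" using d assms F_poly_nonzero by (simp add: eq_fract)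
qed

lemma F_add: "F (x + y) = F x + F y"
proof (cases x)
  case (Fract a b)
  show ?thesis
  proof (cases y)
    case (Fract c d)
    with \<open>x = _\<close> \<open>b \<noteq> 0\<close> show ?thesis
      by (simp add: F_Fract F_poly_nonzero F_poly_add F_poly_mult)
  qed
qed

lemma F_mult: "F (x * y) = F x * F y"
proof (cases x)
  case (Fract a b)
  show ?thesis
  proof (cases y)
    case (Fract c d)
    with \<open>x = _\<close> \<open>b \<noteq> 0\<close> show ?thesis
      by (simp add: F_Fract F_poly_nonzero F_poly_mult)
  qed
qed

lemma F_one: "F 1 = 1"
  by (simp add: One_fract_def F_Fract F_poly_one)

lemma F_zero: "F 0 = 0"
  by (simp add: Zero_fract_def F_Fract F_poly_one F_poly_zero)

lemma F_nonzero: "x \<noteq> 0 \<Longrightarrow> F x \<noteq> 0"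
proof (cases x)
  case (Fract a b)
  assume "x \<noteq> 0"
  then have "a \<noteq> 0" using Fract by (metis eq_fract(3) Zero_fract_def)
  then show ?thesis using Fract F_poly_nonzero by (simp add: F_Fract eq_fract Zero_fract_def)
qed

lemma F_X: "F (X i) = X (Suc i)"
  using shift_mon_single[of i] by (simp add: X_def F_Fract F_poly_one F_poly_single)

lemma F_sum: "F (sum f A) = (\<Sum>a\<in>A. F (f a))"
  by (induction A rule: infinite_finite_induct) (auto simp: F_zero F_add)

lemma F_prod: "F (prod f A) = (\<Prod>a\<in>A. F (f a))"
  by (induction A rule: infinite_finite_induct) (auto simp: F_one F_mult)

lemma Fn_add: "(F^^j) (x + y) = (F^^j) x + (F^^j) y"
  by (induction j) (auto simp: F_add)
lemma Fn_mult: "(F^^j) (x * y) = (F^^j) x * (F^^j) y"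
  by (induction j) (auto simp: F_mult)
lemma Fn_one: "(F^^j) 1 = 1"
  by (induction j) (auto simp: F_one)
lemma Fn_nonzero: "x \<noteq> 0 \<Longrightarrow> (F^^j) x \<noteq> 0"
  by (induction j) (auto simp: F_nonzero)
lemma Fn_X: "(F^^j) (X i) = X (i + j)"
  by (induction j) (auto simp: F_X)
lemma Fn_sum: "(F^^j) (sum f A) = (\<Sum>a\<in>A. (F^^j) (f a))"
  by (induction j) (auto simp: F_sum)

lemma Fn_bracket: "(F^^j) (bracket m) = (\<Sum>i=1..m. X (i + j))"
  by (simp add: bracket_def Fn_sum Fn_X)

lemma bracket_split: "bracket k + (\<Sum>i=1..m. X (i + k)) = bracket (k + m)"
  by (induction m) (simp_all add: bracket_def algebra_simps)

lemma bracket_Fract: "bracket n = Fract (\<Sum>i=1..n. Poly_Mapping.single (Poly_Mapping.single i 1) 1) 1"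
proof (induction n)
  case 0 then show ?case by (simp add: bracket_def Zero_fract_def)
next
  case (Suc n)
  have "bracket (Suc n) = bracket n + X (Suc n)" by (simp add: bracket_def)
  then show ?case using Suc by (simp add: X_def)
qed

lemma single_one_eq: "(Poly_Mapping.single x (Suc 0) = Poly_Mapping.single (Suc 0) (Suc 0)) = (x = Suc 0)"
proof
  assume "Poly_Mapping.single x (Suc 0) = Poly_Mapping.single (Suc 0) (Suc 0)"
  then have "Poly_Mapping.lookup (Poly_Mapping.single x (Suc 0)) x = Poly_Mapping.lookup (Poly_Mapping.single (Suc 0) (Suc 0)) x" by simp
  then show "x = Suc 0" by (cases "x = Suc 0") (simp_all add: lookup_single_not_eq)
qed simp

lemma bracket_nonzero: "n \<ge> 1 \<Longrightarrow> bracket n \<noteq> 0"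
proof -
  assume n: "n \<ge> 1"
  let ?p = "(\<Sum>i=1..n. Poly_Mapping.single (Poly_Mapping.single i 1) (1::rat)) :: mpoly"
  have "Poly_Mapping.lookup ?p (Poly_Mapping.single 1 1) = (\<Sum>i=1..n. if i = 1 then 1 else 0)"
    unfolding lookup_sum lookup_single when_def
    by (rule sum.cong) (use single_one_eq in auto)
  also have "\<dots> = 1" using n by (simp add: sum.delta)
    
  finally have "?p \<noteq> 0" by auto
  then show ?thesis by (simp add: bracket_Fract eq_fract Zero_fract_def)
qed

lemma qfact_nonzero: "qfact n \<noteq> 0"
  by (induction n) (auto simp: bracket_nonzero F_nonzero)


definition wp :: "nat set \<Rightarrow> ratfun" where
  "wp S = (\<Prod>i\<in>S. (F ^^ (i - 1)) (bracket (card {i'\<in>S. i \<le> i'})))"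

definition AA :: "nat \<Rightarrow> nat \<Rightarrow> nat set set" where
  "AA n k = {S. S \<subseteq> {1..n} \<and> card S = k}"

definition P :: "nat \<Rightarrow> nat \<Rightarrow> ratfun" where
  "P n k = sum wp (AA n k)"

lemma finite_AA: "finite (AA n k)"
  by (rule finite_subset[of _ "Pow {1..n}"]) (auto simp: AA_def)

lemma wp_shift: assumes "0 \<notin> S" shows "wp (Suc ` S) = F (wp S)"
proof -
  have "wp (Suc ` S) = (\<Prod>i\<in>S. (F ^^ (Suc i - 1)) (bracket (card {i'\<in>Suc ` S. Suc i \<le> i'})))"
    unfolding wp_def by (simp add: prod.reindex)
  also have "\<dots> = (\<Prod>i\<in>S. F ((F ^^ (i - 1)) (bracket (card {i'\<in>S. i \<le> i'}))))"
  proof (rule prod.cong)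
    fix i assume i: "i \<in> S"
    have "{i'\<in>Suc ` S. Suc i \<le> i'} = Suc ` {i'\<in>S. i \<le> i'}" by auto
    then have c: "card {i'\<in>Suc ` S. Suc i \<le> i'} = card {i'\<in>S. i \<le> i'}"
      by (simp add: card_image)
    have "i = Suc (i - 1)" using i assms by (cases i) auto
    then have "(F ^^ i) = F \<circ> (F ^^ (i - 1))" by (metis funpow.simps(2))
    then show "(F ^^ (Suc i - 1)) (bracket (card {i'\<in>Suc ` S. Suc i \<le> i'})) =
          F ((F ^^ (i - 1)) (bracket (card {i'\<in>S. i \<le> i'})))" using c by simp
  qed simp
  also have "\<dots> = F (wp S)" unfolding wp_def by (simp add: F_prod)
  finally show ?thesis .
qed

lemma wp_ins: assumes "0 \<notin> S" "finite S"
  shows "wp (insert 1 (Suc ` S)) = bracket (Suc (card S)) * F (wp S)"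
proof -
  have n1: "1 \<notin> Suc ` S" using assms by auto
  have "wp (insert 1 (Suc ` S)) = (F ^^ (1 - 1)) (bracket (card {i'\<in>insert 1 (Suc ` S). 1 \<le> i'})) *
      (\<Prod>i\<in>Suc ` S. (F ^^ (i - 1)) (bracket (card {i'\<in>insert 1 (Suc ` S). i \<le> i'})))"
    unfolding wp_def by (rule prod.insert) (use n1 assms in auto)
  also have "(\<Prod>i\<in>Suc ` S. (F ^^ (i - 1)) (bracket (card {i'\<in>insert 1 (Suc ` S). i \<le> i'})))
      = wp (Suc ` S)"
    unfolding wp_def
  proof (rule prod.cong)
    fix i assume "i \<in> Suc ` S"
    then obtain x where x: "x \<in> S" "i = Suc x" by auto
    then have "x \<noteq> 0" using assms by metis
    then have "i \<ge> 2" using x by simp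
    then have "{i'\<in>insert 1 (Suc ` S). i \<le> i'} = {i'\<in>Suc ` S. i \<le> i'}" by auto
    then show "(F ^^ (i - 1)) (bracket (card {i'\<in>insert 1 (Suc ` S). i \<le> i'})) =
        (F ^^ (i - 1)) (bracket (card {i'\<in>Suc ` S. i \<le> i'}))" by simp
  qed simp
  finally have w: "wp (insert 1 (Suc ` S)) = (F ^^ (1 - 1)) (bracket (card {i'\<in>insert 1 (Suc ` S). 1 \<le> i'})) * wp (Suc ` S)" .
  have "{i'\<in>insert 1 (Suc ` S). 1 \<le> i'} = insert 1 (Suc ` S)" by auto
  moreover have "card (insert 1 (Suc ` S)) = Suc (card S)"
    using n1 assms by (simp add: card_image)
  ultimately show ?thesis using w wp_shift[OF assms(1)] by simp
qed

lemma AA_out: "{S \<in> AA (Suc n) k. 1 \<notin> S} = (\<lambda>S. Suc ` S) ` AA n k"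
proof
  show "(\<lambda>S. Suc ` S) ` AA n k \<subseteq> {S \<in> AA (Suc n) k. 1 \<notin> S}"
    by (auto simp: AA_def card_image)
next
  show "{S \<in> AA (Suc n) k. 1 \<notin> S} \<subseteq> (\<lambda>S. Suc ` S) ` AA n k"
  proof
    fix S assume S: "S \<in> {S \<in> AA (Suc n) k. 1 \<notin> S}"
    let ?T = "{i. Suc i \<in> S}"
    have eq: "S = Suc ` ?T"
    proof
      show "S \<subseteq> Suc ` ?T"
      proof
        fix x assume "x \<in> S"
        moreover then have "x \<noteq> 0" using S by (auto simp: AA_def)
        ultimately show "x \<in> Suc ` ?T" by (cases x) auto
      qed
    qed auto
    have "?T \<subseteq> {1..n}"
    proof
      fix i assume "i \<in> ?T"
      then have "Suc i \<in> S" by simp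
      have "1 \<notin> S" using S by simp
      then have "Suc i \<noteq> 1" using \<open>Suc i \<in> S\<close> by metis
      moreover have "Suc i \<in> {1..Suc n}" using S \<open>Suc i \<in> S\<close> by (auto simp: AA_def)
      ultimately show "i \<in> {1..n}" by auto
    qed
    moreover have "card ?T = k"
    proof -
      have "card S = card (Suc ` ?T)" using eq by (rule arg_cong)
      also have "\<dots> = card ?T" by (simp add: card_image)
      finally show ?thesis using S by (simp add: AA_def)
    qed
    ultimately show "S \<in> (\<lambda>S. Suc ` S) ` AA n k" using eq by (auto simp: AA_def)
  qed
qed

lemma AA_in: "{S \<in> AA (Suc n) (Suc k). 1 \<in> S} = (\<lambda>S. insert 1 (Suc ` S)) ` AA n k"
proof
  show "(\<lambda>S. insert 1 (Suc ` S)) ` AA n k \<subseteq> {S \<in> AA (Suc n) (Suc k). 1 \<in> S}"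
  proof
    fix S assume "S \<in> (\<lambda>S. insert 1 (Suc ` S)) ` AA n k"
    then obtain T where T: "T \<in> AA n k" "S = insert 1 (Suc ` T)" by auto
    have fT: "finite T" using T by (auto simp: AA_def intro: finite_subset)
    have "1 \<notin> Suc ` T" using T by (auto simp: AA_def)
    then have "card S = Suc k" using T fT by (simp add: card_image AA_def)
    then show "S \<in> {S \<in> AA (Suc n) (Suc k). 1 \<in> S}" using T by (auto simp: AA_def)
  qed
next
  show "{S \<in> AA (Suc n) (Suc k). 1 \<in> S} \<subseteq> (\<lambda>S. insert 1 (Suc ` S)) ` AA n k"
  proof
    fix S assume S: "S \<in> {S \<in> AA (Suc n) (Suc k). 1 \<in> S}"
    let ?T = "{i. Suc i \<in> S \<and> i \<noteq> 0}"
    have eq: "S = insert 1 (Suc ` ?T)"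
    proof
      show "S \<subseteq> insert 1 (Suc ` ?T)"
      proof
        fix x assume "x \<in> S"
        moreover then have "x \<noteq> 0" using S by (auto simp: AA_def)
        ultimately show "x \<in> insert 1 (Suc ` ?T)" by (cases x) auto
      qed
    qed (use S in auto)
    have fS: "finite S" using S by (auto simp: AA_def intro: finite_subset)
    have "?T \<subseteq> {1..n}" using S by (auto simp: AA_def)
    moreover have "finite ?T" using calculation by (rule finite_subset) simp
    moreover have "1 \<notin> Suc ` ?T" by auto
    ultimately have "card S = Suc (card ?T)"
    proof -
      have "card S = card (insert 1 (Suc ` ?T))" using eq by (rule arg_cong)
      also have "\<dots> = Suc (card (Suc ` ?T))" using \<open>finite ?T\<close> by (subst card_insert_disjoint) auto
      also have "\<dots> = Suc (card ?T)" by (simp add: card_image)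
      finally show ?thesis .
    qed
    then have "card ?T = k" using S by (simp add: AA_def)
    then show "S \<in> (\<lambda>S. insert 1 (Suc ` S)) ` AA n k" using eq \<open>?T \<subseteq> {1..n}\<close> by (auto simp: AA_def)
  qed
qed


lemma P_rec: "P (Suc n) (Suc k) = F (P n (Suc k)) + bracket (Suc k) * F (P n k)"
proof -
  have split: "AA (Suc n) (Suc k) = {S \<in> AA (Suc n) (Suc k). 1 \<notin> S} \<union> {S \<in> AA (Suc n) (Suc k). 1 \<in> S}"
    by auto
  have "P (Suc n) (Suc k) = sum wp {S \<in> AA (Suc n) (Suc k). 1 \<notin> S} + sum wp {S \<in> AA (Suc n) (Suc k). 1 \<in> S}"
    unfolding P_def by (subst split, rule sum.union_disjoint) (auto intro: finite_subset[OF _ finite_AA])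
  also have "sum wp {S \<in> AA (Suc n) (Suc k). 1 \<notin> S} = F (P n (Suc k))"
  proof -
    have inj: "inj_on (\<lambda>S. Suc ` S) (AA n (Suc k))"
      by (rule inj_onI) (simp add: inj_image_eq_iff)
    have "sum wp {S \<in> AA (Suc n) (Suc k). 1 \<notin> S} = sum (\<lambda>S. wp (Suc ` S)) (AA n (Suc k))"
      unfolding AA_out by (simp add: sum.reindex[OF inj])
    also have "\<dots> = sum (\<lambda>S. F (wp S)) (AA n (Suc k))"
      by (rule sum.cong) (auto simp: AA_def intro!: wp_shift)
    finally show ?thesis by (simp add: P_def F_sum)
  qed
  also have "sum wp {S \<in> AA (Suc n) (Suc k). 1 \<in> S} = bracket (Suc k) * F (P n k)"
  proof -
    have inj: "inj_on (\<lambda>S. insert 1 (Suc ` S)) (AA n k)"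
    proof (rule inj_onI)
      fix S T assume "S \<in> AA n k" "T \<in> AA n k" and e: "insert 1 (Suc ` S) = insert 1 (Suc ` T)"
      then have "1 \<notin> Suc ` S" "1 \<notin> Suc ` T" by (auto simp: AA_def)
      then have "Suc ` S = Suc ` T" using e by (metis insert_ident)
      then show "S = T" by (simp add: inj_image_eq_iff)
    qed
    have "sum wp {S \<in> AA (Suc n) (Suc k). 1 \<in> S} = sum (\<lambda>S. wp (insert 1 (Suc ` S))) (AA n k)"
      unfolding AA_in using sum.reindex[OF inj, of wp] by (simp add: comp_def)
    also have "\<dots> = sum (\<lambda>S. bracket (Suc k) * F (wp S)) (AA n k)"
    proof (rule sum.cong)
      fix S assume S: "S \<in> AA n k"
      then have "0 \<notin> S" "finite S" "card S = k" by (auto simp: AA_def intro: finite_subset)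
      then show "wp (insert 1 (Suc ` S)) = bracket (Suc k) * F (wp S)" using wp_ins by simp
    qed simp
    finally show ?thesis by (simp add: P_def F_sum sum_distrib_left)
  qed
  finally show ?thesis .
qed

lemma P_zero: "P n 0 = 1"
proof -
  have "AA n 0 = {{}}"
  proof
    show "AA n 0 \<subseteq> {{}}"
    proof
      fix S assume "S \<in> AA n 0"
      then have "S \<subseteq> {1..n}" "card S = 0" by (auto simp: AA_def)
      moreover from this(1) have "finite S" using finite_subset by blast
      ultimately show "S \<in> {{}}" by simp
    qed
  qed (simp add: AA_def)
  then show ?thesis by (simp add: P_def wp_def)
qed

lemma P_big: "n < k \<Longrightarrow> P n k = 0"
proof -
  assume nk: "n < k"
  have "AA n k = {}"
  proof (rule ccontr)
    assume "AA n k \<noteq> {}"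
    then obtain S where "S \<subseteq> {1..n}" "card S = k" by (auto simp: AA_def)
    then have "k \<le> n" by (metis card_atLeastAtMost card_mono diff_Suc_1 finite_atLeastAtMost)
    then show False using nk by simp
  qed
  then show ?thesis by (simp add: P_def)
qed

lemma Fn_F: "(F ^^ k) (F x) = (F ^^ Suc k) x"
  by (simp add: funpow_swap1)

lemma main: "k \<le> n \<Longrightarrow> P n k * (F ^^ k) (qfact (n - k)) = qfact n"
proof (induction n arbitrary: k)
  case 0 then show ?case by (simp add: P_zero)
next
  case (Suc n)
  show ?case
  proof (cases k)
    case 0 then show ?thesis by (simp add: P_zero)
  next
    case (Suc k')
    show ?thesis
    proof (cases "k' = n")
      case True
      have "P n n = qfact n" using Suc.IH[of n] by (simp add: Fn_one)
      then show ?thesis using True Suc by (simp add: P_rec P_big F_zero Fn_one F_one)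
    next
      case False
      then have kn: "k \<le> n" "k' < n" using Suc \<open>k \<le> Suc n\<close> by auto
      define m where "m = n - k"
      have m1: "n - k' = Suc m" "Suc n - k = Suc m" using kn Suc m_def by auto
      have IH1: "P n k * (F ^^ k) (qfact m) = qfact n" using Suc.IH[OF kn(1)] m_def by simp
      have IH2: "P n k' * (F ^^ k') (qfact (Suc m)) = qfact n" using Suc.IH[of k'] kn m1 by simp
      define u where "u = (F ^^ k) (bracket (Suc m))"
      define v where "v = (F ^^ Suc k) (qfact m)"
      have e1: "(F ^^ k) (qfact (Suc m)) = u * v" by (simp add: u_def v_def Fn_mult Fn_F)
      have e2: "(F ^^ k') (qfact (Suc m)) = (F ^^ k') (bracket (Suc m)) * (F ^^ k) (qfact m)"
        using Suc by (simp add: Fn_mult Fn_F)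
      have A: "F (P n k) * v = F (qfact n)"
        using arg_cong[OF IH1, of F] by (simp add: F_mult v_def Fn_F)
      have B: "F (P n k') * u * v = F (qfact n)"
        using arg_cong[OF IH2, of F] e2 Suc by (simp add: F_mult v_def u_def Fn_F mult.assoc)
      have br: "bracket k + u = bracket (Suc n)"
        using bracket_split[of k "Suc m"] kn m_def by (simp add: u_def Fn_bracket)
      have "P (Suc n) k * (F ^^ k) (qfact (Suc n - k))
          = (F (P n k) + bracket k * F (P n k')) * (u * v)"
        using Suc m1 e1 by (simp add: P_rec)
      also have "\<dots> = u * (F (P n k) * v) + bracket k * (F (P n k') * u * v)"
        by (simp add: algebra_simps)
      also have "\<dots> = (bracket k + u) * F (qfact n)" using A B by (simp add: algebra_simps)
      also have "\<dots> = qfact (Suc n)" using br by simp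
      finally show ?thesis .
    qed
  qed
qed

theorem proposition4p2:
  fixes n k :: nat
  assumes "k \<le> n"
  shows "qfact n / (qfact k * (F ^^ k) (qfact (n - k)))
           = (\<Sum>S\<in>{S. S \<subseteq> {1..n} \<and> card S = k}. wt S)"
proof -
  have c: "(F ^^ k) (qfact (n - k)) \<noteq> 0" by (simp add: Fn_nonzero qfact_nonzero)
  have "(\<Sum>S\<in>{S. S \<subseteq> {1..n} \<and> card S = k}. wt S) = (\<Sum>S\<in>AA n k. wp S / qfact k)"
    unfolding AA_def wt_def wp_def by (rule sum.cong) auto
  also have "\<dots> = P n k / qfact k" by (simp add: P_def sum_divide_distrib)
  also have "\<dots> = qfact n / (qfact k * (F ^^ k) (qfact (n - k)))"
    using main[OF assms] c by (metis mult_divide_mult_cancel_right mult.commute)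
  finally show ?thesis by simp
qed

end
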